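(* If $\alpha>\alpha^*(V)$, then for almost every realization of $\mathcal N$ the clan of ancestors $\mathcal A^{(\gamma,t,s)}$ of every point $(\gamma,t,s)\in\Gamma\times\mathbb{R}\times\mathbb{R}^+$ is finite.
   Context: Let $V:\mathbb{Z}^d\to\mathbb{R}^+\cup\{+\infty\}$ be strictly convex with $V(\vec0)=0$, and $\alpha>0$. $\Gamma$ is the set of finite cycles of $\mathbb{Z}^d$ (a cycle of length $|\gamma|=n\ge2$ on distinct sites $x_1,\dots,x_n$ maps $x_i\mapsto x_{i+1}$ mod $n$ and fixes other sites; support $\{\gamma\}$); $w(\gamma)=\exp\{-\alpha\sum_{x\in\{\gamma\}}V(\gamma(x)-x)\}$; $\beta(V,\alpha)=\sum_{\gamma\in\Gamma,\vec0\in\{\gamma\}}|\gamma|w(\gamma)$; $\alpha^*(V)=\inf\{\alpha:\beta(V,\alpha)<1\}$. $\gamma\not\sim\gamma'$ if supports intersect. $\mathcal N$ is a Poisson point process on $\Gamma\times\mathbb{R}\times\mathbb{R}^+$ with intensity $w(\gamma)\,dt\,e^{-s}ds$. For $\varphi=(\gamma,t,s)$: $\mathcal A_1^\varphi=\{(\gamma',t',s')\in\mathcal N:\gamma'\not\sim\gamma,\ t'<t<t'+s'\}$, $\mathcal A_{n+1}^\varphi=\bigcup_{\varphi'\in\mathcal A_n^\varphi}\mathcal A_1^{\varphi'}$, and the clan of ancestors is $\mathcal A^\varphi=\bigcup_{n\ge1}\mathcal A_n^\varphi$. *)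

theory Defs
  imports "HOL-Probability.Probability" "HOL-Combinatorics.Cycles"
begin

type_synonym 'd site = "int ^ 'd"
type_synonym 'd cyc = "'d site \<Rightarrow> 'd site"
type_synonym 'd point = "'d cyc \<times> real \<times> real"

definition cycles :: "('d::finite) cyc set" where
  "cycles = {cycle_of_list xs | xs. distinct xs \<and> length xs \<ge> 2}"

definition supp :: "('d::finite) cyc \<Rightarrow> 'd site set" where
  "supp g = {x. g x \<noteq> x}"

definition strictly_convex_lattice :: "(('d::finite) site \<Rightarrow> ereal) \<Rightarrow> bool" where
  "strictly_convex_lattice V \<longleftrightarrow>
     (\<forall>x y z (u::real). x \<noteq> y \<and> 0 < u \<and> u < 1 \<and> V x < \<infinity> \<and> V y < \<infinity> \<and>
        (\<forall>i. real_of_int (z $ i) = u * real_of_int (x $ i) + (1 - u) * real_of_int (y $ i))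
        \<longrightarrow> V z < ereal u * V x + ereal (1 - u) * V y)"

definition weight :: "(('d::finite) site \<Rightarrow> ereal) \<Rightarrow> real \<Rightarrow> 'd cyc \<Rightarrow> real" where
  "weight V \<alpha> g = (let S = (\<Sum>x\<in>supp g. V (g x - x)) in
      if S = \<infinity> then 0 else exp (- \<alpha> * real_of_ereal S))"

definition beta :: "(('d::finite) site \<Rightarrow> ereal) \<Rightarrow> real \<Rightarrow> ennreal" where
  "beta V \<alpha> = (\<Sum>\<^sub>\<infinity> g \<in> {g \<in> cycles. 0 \<in> supp g}. ennreal (real (card (supp g)) * weight V \<alpha> g))"

definition alpha_star :: "(('d::finite) site \<Rightarrow> ereal) \<Rightarrow> ereal" where
  "alpha_star V = Inf {ereal \<alpha> | \<alpha>. \<alpha> > 0 \<and> beta V \<alpha> < 1}"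

definition intensity :: "(('d::finite) site \<Rightarrow> ereal) \<Rightarrow> real \<Rightarrow> 'd point measure" where
  "intensity V \<alpha> =
     density (count_space cycles) (\<lambda>g. ennreal (weight V \<alpha> g))
     \<Otimes>\<^sub>M (lborel :: real measure)
     \<Otimes>\<^sub>M density (restrict_space lborel {0..}) (\<lambda>s. ennreal (exp (- s)))"

definition poisson_point_process :: "'w measure \<Rightarrow> 'p measure \<Rightarrow> ('w \<Rightarrow> 'p set) \<Rightarrow> bool" where
  "poisson_point_process M \<mu> N \<longleftrightarrow>
     prob_space M \<and>
     (\<forall>\<omega>\<in>space M. N \<omega> \<subseteq> space \<mu>) \<and>
     (\<forall>B \<in> sets \<mu>. emeasure \<mu> B < \<infinity> \<longrightarrow>
        (AE \<omega> in M. finite (N \<omega> \<inter> B)) \<and>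
        (\<forall>k::nat. {\<omega> \<in> space M. card (N \<omega> \<inter> B) = k} \<in> sets M \<and>
           measure M {\<omega> \<in> space M. card (N \<omega> \<inter> B) = k} =
             exp (- enn2real (emeasure \<mu> B)) * enn2real (emeasure \<mu> B) ^ k / fact k)) \<and>
     (\<forall>(I::nat set) B. finite I \<longrightarrow> disjoint_family_on B I \<longrightarrow>
        (\<forall>i\<in>I. B i \<in> sets \<mu> \<and> emeasure \<mu> (B i) < \<infinity>) \<longrightarrow>
        prob_space.indep_vars M (\<lambda>_. count_space UNIV) (\<lambda>i \<omega>. card (N \<omega> \<inter> B i)) I)"

definition anc1 :: "('d::finite) point set \<Rightarrow> 'd point \<Rightarrow> 'd point set" where
  "anc1 Nw \<phi> = {(g', t', s') \<in> Nw. supp g' \<inter> supp (fst \<phi>) \<noteq> {} \<and>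
                   t' < fst (snd \<phi>) \<and> fst (snd \<phi>) < t' + s'}"

text \<open>ancn Nw n phi is A_{n+1}^phi.\<close>
fun ancn :: "('d::finite) point set \<Rightarrow> nat \<Rightarrow> 'd point \<Rightarrow> 'd point set" where
  "ancn Nw 0 \<phi> = anc1 Nw \<phi>"
| "ancn Nw (Suc n) \<phi> = (\<Union>\<phi>'\<in>ancn Nw n \<phi>. anc1 Nw \<phi>')"

definition clan :: "('d::finite) point set \<Rightarrow> 'd point \<Rightarrow> 'd point set" where
  "clan Nw \<phi> = (\<Union>n. ancn Nw n \<phi>)"

end

theory Submission
  imports Defs "HOL-Real_Asymp.Real_Asymp"
begin

lemma cycles_supp_finite: "g \<in> cycles \<Longrightarrow> finite (supp g)"
proof -
  assume "g \<in> cycles"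
  then obtain xs where g: "g = cycle_of_list xs" unfolding cycles_def by auto
  have "supp g \<subseteq> set xs" unfolding supp_def g using id_outside_supp by fastforce
  then show ?thesis by (rule finite_subset) simp
qed

lemma countable_cycles: "countable (cycles :: ('d::finite) cyc set)"
proof -
  have "cycles \<subseteq> cycle_of_list ` (UNIV :: ('d site) list set)" unfolding cycles_def by auto
  moreover have "countable (cycle_of_list ` (UNIV :: ('d site) list set))" by simp
  ultimately show ?thesis by (rule countable_subset)
qed

definition tr :: "('d::finite) site \<Rightarrow> 'd cyc \<Rightarrow> 'd cyc" where
  "tr a g = (\<lambda>x. g (x - a) + a)"

lemma tr_cycle: "distinct xs \<Longrightarrow> tr a (cycle_of_list xs) = cycle_of_list (map (\<lambda>x. x + a) xs)"
proof -
  assume that: "distinct xs"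
  have b: "bij (\<lambda>x::'a site. x + a)" by (rule bijI) (auto simp: inj_def surj_def intro!: exI[of _ "_ - a"])
  have inv: "inv (\<lambda>x::'a site. x + a) = (\<lambda>x. x - a)"
    by (rule inv_equality) auto
  have "cycle_of_list (map (\<lambda>x. x + a) xs) = (\<lambda>x. x + a) \<circ> cycle_of_list xs \<circ> inv (\<lambda>x. x + a)"
    using conjugation_of_cycle[OF _ b] that by metis
  then show ?thesis unfolding inv tr_def by (auto simp: fun_eq_iff)
qed
lemma supp_tr: "supp (tr a g) = (\<lambda>y. y + a) ` supp g"
proof -
  have "supp (tr a g) = {x. g (x - a) \<noteq> x - a}" unfolding supp_def tr_def
    by (auto simp: algebra_simps)
  also have "\<dots> = (\<lambda>y. y + a) ` supp g" unfolding supp_def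
    by (auto simp: image_iff intro!: exI[of _ "_ - a"])
  finally show ?thesis .
qed

lemma tr_in_cycles: "g \<in> cycles \<Longrightarrow> tr a g \<in> cycles"
proof -
  assume "g \<in> cycles"
  then obtain xs where g: "g = cycle_of_list xs" "distinct xs" "length xs \<ge> 2" unfolding cycles_def by auto
  have "tr a g = cycle_of_list (map (\<lambda>x. x + a) xs)" using g tr_cycle by metis
  moreover have "distinct (map (\<lambda>x. x + a) xs)" using g by (simp add: distinct_map inj_on_def)
  ultimately show ?thesis unfolding cycles_def using g by auto
qed

lemma tr_tr: "tr (- a) (tr a g) = g"
  unfolding tr_def by (auto simp: fun_eq_iff)

lemma card_supp_tr: "card (supp (tr a g)) = card (supp g)"
  unfolding supp_tr by (rule card_image) (auto simp: inj_on_def)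

lemma weight_tr: "weight V \<alpha> (tr a g) = weight V \<alpha> g"
proof -
  have "(\<Sum>x\<in>supp (tr a g). V (tr a g x - x)) = (\<Sum>x\<in>supp g. V (g x - x))"
    unfolding supp_tr by (subst sum.reindex) (auto simp: inj_on_def tr_def)
  then show ?thesis unfolding weight_def by simp
qed

lemma weight_nonneg: "weight V \<alpha> g \<ge> 0"
  unfolding weight_def Let_def by auto

abbreviation fw where "fw V \<alpha> g \<equiv> ennreal (real (card (supp g)) * weight V \<alpha> g)"

lemma sum_le_beta:
  assumes F: "finite F" "F \<subseteq> cycles" "\<And>h. h \<in> F \<Longrightarrow> x \<in> supp h"
  shows "(\<Sum>h\<in>F. fw V \<alpha> h) \<le> beta V \<alpha>"
proof -
  let ?G = "tr (- x) ` F"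
  have inj: "inj_on (tr (- x)) F"
    by (metis inj_on_inverseI tr_tr minus_minus)
  have "(\<Sum>h\<in>F. fw V \<alpha> h) = (\<Sum>h\<in>?G. fw V \<alpha> h)"
    by (subst sum.reindex[OF inj]) (simp add: card_supp_tr weight_tr)
  also have "\<dots> \<le> (SUP H\<in>{H. finite H \<and> H \<subseteq> {g \<in> cycles. 0 \<in> supp g}}. sum (fw V \<alpha>) H)"
  proof (rule SUP_upper)
    show "?G \<in> {H. finite H \<and> H \<subseteq> {g \<in> cycles. 0 \<in> supp g}}"
      using F by (auto simp: tr_in_cycles supp_tr image_iff intro!: bexI[of _ x])
  qed
  also have "\<dots> = beta V \<alpha>" unfolding beta_def
    by (rule nonneg_infsum_complete[symmetric]) simp
  finally show ?thesis .
qed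

lemma sum_meet_le:
  assumes F: "finite F" "F \<subseteq> cycles" "\<And>h. h \<in> F \<Longrightarrow> supp h \<inter> supp g \<noteq> {}"
    and g: "g \<in> cycles"
  shows "(\<Sum>h\<in>F. fw V \<alpha> h) \<le> of_nat (card (supp g)) * beta V \<alpha>"
proof -
  have "(\<Sum>h\<in>F. fw V \<alpha> h) \<le> (\<Sum>h\<in>F. \<Sum>x\<in>supp g. if x \<in> supp h then fw V \<alpha> h else 0)"
  proof (rule sum_mono)
    fix h assume h: "h \<in> F"
    then obtain x where x: "x \<in> supp h" "x \<in> supp g" using F by blast
    have "fw V \<alpha> h = (\<Sum>y\<in>{x}. if y \<in> supp h then fw V \<alpha> h else 0)" using x by simp
    also have "\<dots> \<le> (\<Sum>y\<in>supp g. if y \<in> supp h then fw V \<alpha> h else 0)"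
      by (rule sum_mono2) (use x cycles_supp_finite[OF g] in auto)
    finally show "fw V \<alpha> h \<le> (\<Sum>y\<in>supp g. if y \<in> supp h then fw V \<alpha> h else 0)" .
  qed
  also have "\<dots> = (\<Sum>x\<in>supp g. \<Sum>h\<in>F. if x \<in> supp h then fw V \<alpha> h else 0)"
    by (rule sum.swap)
  also have "\<dots> = (\<Sum>x\<in>supp g. \<Sum>h\<in>{h\<in>F. x \<in> supp h}. fw V \<alpha> h)"
    by (rule sum.cong[OF refl]) (simp add: sum.inter_filter[symmetric] F)
  also have "\<dots> \<le> (\<Sum>x\<in>supp g. beta V \<alpha>)"
    by (rule sum_mono, rule sum_le_beta) (use F in auto)
  also have "\<dots> = of_nat (card (supp g)) * beta V \<alpha>" by simp
  finally show ?thesis .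
qed

lemma exp_interval_integral:
  assumes "a \<le> b"
  shows "(\<integral>\<^sup>+x. ennreal (exp (- x)) * indicator {a..<b} x \<partial>lborel) \<le> ennreal (exp (- a) - exp (- b))"
proof -
  have "(\<integral>\<^sup>+x. ennreal (exp (- x)) * indicator {a..<b} x \<partial>lborel)
      \<le> (\<integral>\<^sup>+x. ennreal (exp (- x) * indicator {a..b} x) \<partial>lborel)"
    by (rule nn_integral_mono) (auto simp: indicator_def)
  also have "\<dots> = ennreal (exp (- a) - exp (- b))"
  proof -
    have "((\<lambda>x. exp (- x)) has_integral ((- exp (- b)) - (- exp (- a)))) {a..b}"
      by (rule fundamental_theorem_of_calculus[OF assms])
         (auto intro!: derivative_eq_intros simp: has_real_derivative_iff_has_vector_derivative[symmetric])
    then have h: "((\<lambda>x. exp (- x)) has_integral (exp (- a) - exp (- b))) {a..b}" by simp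
    have "(\<lambda>x. exp (- x) * indicator {a..b} x) = (\<lambda>x. if x \<in> {a..b} then exp (- x) else 0)"
      by (auto simp: fun_eq_iff indicator_def)
    then have "((\<lambda>x. exp (- x) * indicator {a..b} x) has_integral (exp (- a) - exp (- b))) UNIV"
      using has_integral_restrict_UNIV[of "{a..b}" "\<lambda>x. exp (- x)"] h by simp
    then show ?thesis
      by (intro nn_integral_has_integral_lborel) auto
  qed
  finally show ?thesis .
qed

definition D3 :: "real measure" where
  "D3 = density (restrict_space lborel {0..}) (\<lambda>s. ennreal (exp (- s)))"

lemma intensity_alt: "intensity V \<alpha> = density (count_space cycles) (\<lambda>g. ennreal (weight V \<alpha> g)) \<Otimes>\<^sub>M (lborel \<Otimes>\<^sub>M D3)"
  unfolding intensity_def D3_def by simp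

lemma sigma_finite_D3: "sigma_finite_measure D3"
proof -
  have sf: "sigma_finite_measure (restrict_space lborel {0::real..})"
    by (rule sigma_finite_measure_restrict_space) (auto simp: lborel.sigma_finite_measure_axioms)
  show ?thesis unfolding D3_def
    by (subst sigma_finite_measure.sigma_finite_iff_density_finite'[OF sf]) 
       (auto intro!: measurable_restrict_space1)
qed

lemma sets_D3: "sets D3 = sets (restrict_space lborel {0..})"
  unfolding D3_def by simp

lemma space_D3: "space D3 = {0..}"
  unfolding D3_def by simp

lemma D3_interval:
  assumes "0 \<le> a" "a \<le> b"
  shows "{a..<b} \<in> sets D3" "emeasure D3 {a..<b} \<le> ennreal (exp (- a) - exp (- b))"
proof -
  show A: "{a..<b} \<in> sets D3" unfolding sets_D3 using assms
    by (subst sets_restrict_space_iff) auto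
  have "emeasure D3 {a..<b} = (\<integral>\<^sup>+x. ennreal (exp (- x)) * indicator {a..<b} x \<partial>restrict_space lborel {0..})"
    unfolding D3_def by (rule emeasure_density) (use A[unfolded sets_D3] in \<open>auto intro!: measurable_restrict_space1\<close>)
  also have "\<dots> = (\<integral>\<^sup>+x. ennreal (exp (- x)) * indicator {a..<b} x * indicator {0..} x \<partial>lborel)"
    by (rule nn_integral_restrict_space) auto
  also have "\<dots> = (\<integral>\<^sup>+x. ennreal (exp (- x)) * indicator {a..<b} x \<partial>lborel)"
    by (rule nn_integral_cong) (use assms in \<open>auto simp: indicator_def\<close>)
  also have "\<dots> \<le> ennreal (exp (- a) - exp (- b))" by (rule exp_interval_integral) fact
  finally show "emeasure D3 {a..<b} \<le> ennreal (exp (- a) - exp (- b))" .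
qed

lemma space_intensity: "space (intensity V \<alpha>) = cycles \<times> UNIV \<times> {0..}"
  unfolding intensity_alt by (simp add: space_pair_measure space_D3)

definition cell :: "real \<Rightarrow> ('d::finite) cyc \<times> int \<times> nat \<Rightarrow> 'd point set" where
  "cell \<delta> c = (case c of (g, m, k) \<Rightarrow>
     {g} \<times> {real_of_int m * \<delta> ..< (real_of_int m + 1) * \<delta>} \<times> {real k * \<delta> ..< (real k + 1) * \<delta>})"

lemma cell_sets_emeasure:
  assumes "\<delta> > 0" "g \<in> cycles"
  shows "cell \<delta> (g, m, k) \<in> sets (intensity V \<alpha>)"
    "emeasure (intensity V \<alpha>) (cell \<delta> (g, m, k)) \<le>
       ennreal (weight V \<alpha> g * \<delta> * (exp (- (real k * \<delta>)) - exp (- ((real k + 1) * \<delta>))))"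
proof -
  let ?a = "real k * \<delta>" and ?b = "(real k + 1) * \<delta>"
  have ab: "0 \<le> ?a" "?a \<le> ?b" using assms by (auto simp: algebra_simps)
  note D = D3_interval[OF ab]
  have I: "{real_of_int m * \<delta> ..< (real_of_int m + 1) * \<delta>} \<in> sets lborel" by simp
  have S2: "{real_of_int m * \<delta> ..< (real_of_int m + 1) * \<delta>} \<times> {?a..<?b} \<in> sets (lborel \<Otimes>\<^sub>M D3)"
    using I D(1) by auto
  have S1: "{g} \<in> sets (density (count_space cycles) (\<lambda>g. ennreal (weight V \<alpha> g)))"
    using assms by simp
  show "cell \<delta> (g, m, k) \<in> sets (intensity V \<alpha>)"
    unfolding intensity_alt cell_def using S1 S2 by auto
  interpret D3: sigma_finite_measure D3 by (rule sigma_finite_D3)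
  have sf2: "sigma_finite_measure (lborel \<Otimes>\<^sub>M D3)"
    by (rule sigma_finite_pair_measure) (auto simp: lborel.sigma_finite_measure_axioms sigma_finite_D3)
  interpret P2: sigma_finite_measure "lborel \<Otimes>\<^sub>M D3" by (rule sf2)
  have "emeasure (intensity V \<alpha>) (cell \<delta> (g, m, k)) =
     emeasure (density (count_space cycles) (\<lambda>g. ennreal (weight V \<alpha> g))) {g} *
     emeasure (lborel \<Otimes>\<^sub>M D3) ({real_of_int m * \<delta> ..< (real_of_int m + 1) * \<delta>} \<times> {?a..<?b})"
    unfolding intensity_alt cell_def using S1 S2 by (simp add: P2.emeasure_pair_measure_Times)
  also have "emeasure (density (count_space cycles) (\<lambda>g. ennreal (weight V \<alpha> g))) {g} = ennreal (weight V \<alpha> g)"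
    using assms by (subst emeasure_density) auto
  also have "emeasure (lborel \<Otimes>\<^sub>M D3) ({real_of_int m * \<delta> ..< (real_of_int m + 1) * \<delta>} \<times> {?a..<?b})
      = emeasure lborel {real_of_int m * \<delta> ..< (real_of_int m + 1) * \<delta>} * emeasure D3 {?a..<?b}"
    using I D(1) by (simp add: D3.emeasure_pair_measure_Times)
  also have "emeasure lborel {real_of_int m * \<delta> ..< (real_of_int m + 1) * \<delta>} = ennreal \<delta>"
    using assms by (simp add: algebra_simps)
  finally have "emeasure (intensity V \<alpha>) (cell \<delta> (g, m, k)) = ennreal (weight V \<alpha> g) * (ennreal \<delta> * emeasure D3 {?a..<?b})" .
  also have "\<dots> \<le> ennreal (weight V \<alpha> g) * (ennreal \<delta> * ennreal (exp (- ?a) - exp (- ?b)))"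
    by (intro mult_left_mono D(2)) auto
  also have "\<dots> = ennreal (weight V \<alpha> g * \<delta> * (exp (- ?a) - exp (- ?b)))"
    using assms weight_nonneg[of V \<alpha> g] ab by (simp add: ennreal_mult mult.assoc)
  finally show "emeasure (intensity V \<alpha>) (cell \<delta> (g, m, k)) \<le>
       ennreal (weight V \<alpha> g * \<delta> * (exp (- (real k * \<delta>)) - exp (- ((real k + 1) * \<delta>))))" .
qed

lemma telescope:
  fixes q :: real
  shows "(\<Sum>k\<le>n. (real k + 2) * (q ^ k - q ^ Suc k)) = 1 + (\<Sum>k\<le>n. q ^ k) - (real n + 2) * q ^ Suc n"
  by (induction n) (auto simp: algebra_simps)

lemma telescope_le:
  fixes q :: real
  assumes "0 \<le> q" "q < 1"
  shows "(\<Sum>k\<le>n. (real k + 2) * (q ^ k - q ^ Suc k)) \<le> 1 + 1 / (1 - q)"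
proof -
  have "(\<Sum>k\<le>n. q ^ k) = (1 - q ^ Suc n) / (1 - q)"
  proof -
    have "(\<Sum>k\<le>n. q ^ k) = (\<Sum>k<Suc n. q ^ k)" by (simp add: lessThan_Suc_atMost)
    also have "\<dots> = (1 - q ^ Suc n) / (1 - q)" using assms by (simp only: sum_gp_strict) simp
    finally show ?thesis .
  qed
  also have "\<dots> \<le> 1 / (1 - q)" using assms by (auto intro!: divide_right_mono)
  finally have "(\<Sum>k\<le>n. q ^ k) \<le> 1 / (1 - q)" .
  moreover have "(real n + 2) * q ^ Suc n \<ge> 0" using assms by auto
  ultimately show ?thesis unfolding telescope by linarith
qed

definition hfun :: "real \<Rightarrow> real" where "hfun \<delta> = \<delta> * (1 + 1 / (1 - exp (- \<delta>)))"

lemma slice_sum_le: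
  assumes "\<delta> > 0" "finite T" "\<And>m' k. (m', k) \<in> T \<Longrightarrow> m' \<le> m \<and> m - m' \<le> int k + 1"
  shows "(\<Sum>(m', k)\<in>T. \<delta> * (exp (- (real k * \<delta>)) - exp (- ((real k + 1) * \<delta>)))) \<le> hfun \<delta>"
proof -
  define q where "q = exp (- \<delta>)"
  have q: "0 \<le> q" "q < 1" using assms unfolding q_def by auto
  have eq: "exp (- (real k * \<delta>)) - exp (- ((real k + 1) * \<delta>)) = q ^ k - q ^ Suc k" for k
    unfolding q_def by (simp add: exp_of_nat_mult[symmetric] algebra_simps exp_add[symmetric])
  define f where "f k = \<delta> * (q ^ k - q ^ Suc k)" for k
  have f0: "f k \<ge> 0" for k
  proof -
    have "q ^ Suc k \<le> q ^ k" using power_decreasing[of k "Suc k" q] q by auto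
    then show ?thesis unfolding f_def using assms by auto
  qed
  define n where "n = Max (insert 0 (snd ` T))"
  have kn: "k \<le> n" if "(m', k) \<in> T" for m' k unfolding n_def using assms(2) that by (intro Max_ge) force+
  define S where "S = (\<lambda>(k, m'). (m', k)) ` (SIGMA k:{..n}. {m - int k - 1 .. m})"
  have inj: "inj_on (\<lambda>(k::nat, m'::int). (m', k)) X" for X by (auto simp: inj_on_def)
  have TS: "T \<subseteq> S" unfolding S_def using assms(3) kn by (force simp: image_iff)
  have finS: "finite S" unfolding S_def by auto
  have "(\<Sum>(m', k)\<in>T. \<delta> * (exp (- (real k * \<delta>)) - exp (- ((real k + 1) * \<delta>)))) = (\<Sum>(m', k)\<in>T. f k)"
    unfolding eq f_def by simp
  also have "\<dots> \<le> (\<Sum>(m', k)\<in>S. f k)"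
    by (rule sum_mono2[OF finS TS]) (auto simp: f0)
  also have "\<dots> = (\<Sum>(k, m')\<in>(SIGMA k:{..n}. {m - int k - 1 .. m}). f k)"
    unfolding S_def by (subst sum.reindex[OF inj]) (simp add: case_prod_beta)
  also have "\<dots> = (\<Sum>k\<le>n. \<Sum>m'\<in>{m - int k - 1 .. m}. f k)"
    by (subst sum.Sigma[symmetric]) auto
  also have "\<dots> = (\<Sum>k\<le>n. (real k + 2) * f k)"
    by (rule sum.cong) (auto simp: nat_add_distrib)
  also have "\<dots> = \<delta> * (\<Sum>k\<le>n. (real k + 2) * (q ^ k - q ^ Suc k))"
    unfolding f_def by (simp add: sum_distrib_left algebra_simps)
  also have "\<dots> \<le> \<delta> * (1 + 1 / (1 - q))"
    using telescope_le[OF q] assms by (intro mult_left_mono) auto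
  finally show ?thesis unfolding hfun_def q_def .
qed

lemma hfun_tendsto: "(hfun \<longlongrightarrow> 1) (at_right 0)"
  unfolding hfun_def by real_asymp

definition Rel :: "int \<Rightarrow> ('d::finite) cyc \<Rightarrow> 'd cyc \<times> int \<times> nat \<Rightarrow> bool" where
  "Rel m g c' = (case c' of (g', m', k') \<Rightarrow> supp g' \<inter> supp g \<noteq> {} \<and> m' \<le> m \<and> m - m' \<le> int k' + 1)"

lemma hfun_nonneg: "\<delta> > 0 \<Longrightarrow> hfun \<delta> \<ge> 0"
  unfolding hfun_def by (auto intro!: mult_nonneg_nonneg add_nonneg_nonneg)

lemma rel_sum:
  fixes V :: "('d::finite) site \<Rightarrow> ereal" and g :: "'d cyc"
  assumes d: "\<delta> > 0" and g: "g \<in> cycles" and K: "finite K" "\<And>c. c \<in> K \<Longrightarrow> fst c \<in> cycles \<and> Rel m g c"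
  shows "(\<Sum>c\<in>K. emeasure (intensity V \<alpha>) (cell \<delta> c) * of_nat (card (supp (fst c))))
           \<le> of_nat (card (supp g)) * beta V \<alpha> * ennreal (hfun \<delta>)"
proof -
  define b :: "'d cyc \<times> int \<times> nat \<Rightarrow> real" where "b c = (case c of (g', m', k') \<Rightarrow>
      real (card (supp g')) * weight V \<alpha> g' * (\<delta> * (exp (- (real k' * \<delta>)) - exp (- ((real k' + 1) * \<delta>)))))" for c
  have b0: "b c \<ge> 0" for c
    unfolding b_def using d weight_nonneg by (auto simp: case_prod_beta intro!: mult_nonneg_nonneg)
  have "(\<Sum>c\<in>K. emeasure (intensity V \<alpha>) (cell \<delta> c) * of_nat (card (supp (fst c)))) \<le> (\<Sum>c\<in>K. ennreal (b c))"
  proof (rule sum_mono)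
    fix c assume c: "c \<in> K"
    obtain g' m' k' where cc: "c = (g', m', k')" by (cases c) auto
    have g': "g' \<in> cycles" using K(2)[OF c] cc by auto
    have "emeasure (intensity V \<alpha>) (cell \<delta> c) * of_nat (card (supp (fst c)))
       \<le> ennreal (weight V \<alpha> g' * \<delta> * (exp (- (real k' * \<delta>)) - exp (- ((real k' + 1) * \<delta>)))) * of_nat (card (supp g'))"
      unfolding cc using cell_sets_emeasure(2)[OF d g'] by (auto intro!: mult_right_mono)
    also have "\<dots> = ennreal (weight V \<alpha> g' * \<delta> * (exp (- (real k' * \<delta>)) - exp (- ((real k' + 1) * \<delta>))) * real (card (supp g')))"
      by (simp add: ennreal_mult'' ennreal_of_nat_eq_real_of_nat)
    also have "\<dots> = ennreal (b c)"
      unfolding cc b_def by (simp add: algebra_simps)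
    finally show "emeasure (intensity V \<alpha>) (cell \<delta> c) * of_nat (card (supp (fst c))) \<le> ennreal (b c)" .
  qed
  also have "\<dots> = ennreal (\<Sum>c\<in>K. b c)" using b0 by (simp add: sum_ennreal)
  also have "(\<Sum>c\<in>K. b c) \<le> (\<Sum>g'\<in>fst ` K. real (card (supp g')) * weight V \<alpha> g' * hfun \<delta>)"
  proof -
    define T where "T g' = {mk. (g', mk) \<in> K}" for g'
    have KS: "K = Sigma (fst ` K) T" unfolding T_def by force
    have finT: "finite (T g')" for g'
    proof -
      have "T g' \<subseteq> snd ` K" unfolding T_def by force
      then show ?thesis using K(1) finite_subset by blast
    qed
    have "(\<Sum>c\<in>K. b c) = (\<Sum>c\<in>Sigma (fst ` K) T. b c)" using KS by (rule arg_cong)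
    also have "\<dots> = (\<Sum>g'\<in>fst ` K. \<Sum>mk\<in>T g'. b (g', mk))"
      using sum.Sigma[of "fst ` K" T "\<lambda>x y. b (x,y)"] K(1) finT by simp
    also have "\<dots> \<le> (\<Sum>g'\<in>fst ` K. real (card (supp g')) * weight V \<alpha> g' * hfun \<delta>)"
    proof (rule sum_mono)
      fix g' assume "g' \<in> fst ` K"
      have "(\<Sum>mk\<in>T g'. b (g', mk)) = real (card (supp g')) * weight V \<alpha> g' *
          (\<Sum>(m', k')\<in>T g'. \<delta> * (exp (- (real k' * \<delta>)) - exp (- ((real k' + 1) * \<delta>))))"
        unfolding b_def by (simp add: sum_distrib_left case_prod_beta)
      also have "\<dots> \<le> real (card (supp g')) * weight V \<alpha> g' * hfun \<delta>"
      proof (rule mult_left_mono)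
        show "(\<Sum>(m', k')\<in>T g'. \<delta> * (exp (- (real k' * \<delta>)) - exp (- ((real k' + 1) * \<delta>)))) \<le> hfun \<delta>"
          by (rule slice_sum_le[OF d finT]) (use K(2) in \<open>auto simp: T_def Rel_def\<close>)
      qed (use weight_nonneg[of V \<alpha> g'] in auto)
      finally show "(\<Sum>mk\<in>T g'. b (g', mk)) \<le> real (card (supp g')) * weight V \<alpha> g' * hfun \<delta>" .
    qed
    finally show ?thesis .
  qed
  then have "ennreal (\<Sum>c\<in>K. b c) \<le> ennreal (\<Sum>g'\<in>fst ` K. real (card (supp g')) * weight V \<alpha> g' * hfun \<delta>)"
    by (rule ennreal_leI)
  also have "\<dots> = (\<Sum>g'\<in>fst ` K. fw V \<alpha> g') * ennreal (hfun \<delta>)"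
  proof -
    have "ennreal (\<Sum>g'\<in>fst ` K. real (card (supp g')) * weight V \<alpha> g' * hfun \<delta>)
       = (\<Sum>g'\<in>fst ` K. ennreal (real (card (supp g')) * weight V \<alpha> g' * hfun \<delta>))"
      using hfun_nonneg[OF d] weight_nonneg by (intro sum_ennreal[symmetric]) (auto intro!: mult_nonneg_nonneg)
    also have "\<dots> = (\<Sum>g'\<in>fst ` K. fw V \<alpha> g' * ennreal (hfun \<delta>))"
      using hfun_nonneg[OF d] by (intro sum.cong refl) (simp add: ennreal_mult'')
    finally show ?thesis by (simp add: sum_distrib_right)
  qed
  also have "\<dots> \<le> of_nat (card (supp g)) * beta V \<alpha> * ennreal (hfun \<delta>)"
  proof (rule mult_right_mono)
    show "(\<Sum>g'\<in>fst ` K. fw V \<alpha> g') \<le> of_nat (card (supp g)) * beta V \<alpha>"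
      by (rule sum_meet_le[OF _ _ _ g]) (use K in \<open>auto simp: Rel_def\<close>)
  qed simp
  finally show ?thesis .
qed

lemma prod_list_count:
  fixes f :: "'a \<Rightarrow> 'b::comm_monoid_mult"
  shows "prod_list (map f xs) = (\<Prod>x\<in>set xs. f x ^ count_list xs x)"
proof (induction xs)
  case (Cons a xs)
  show ?case
  proof (cases "a \<in> set xs")
    case True
    have "(\<Prod>x\<in>set (a # xs). f x ^ count_list (a # xs) x)
        = f a ^ count_list (a # xs) a * (\<Prod>x\<in>set xs - {a}. f x ^ count_list (a # xs) x)"
      using True by (simp add: prod.remove[of "set xs" a] insert_absorb)
    also have "(\<Prod>x\<in>set xs - {a}. f x ^ count_list (a # xs) x) = (\<Prod>x\<in>set xs - {a}. f x ^ count_list xs x)"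
      by (intro prod.cong) auto
    also have "f a ^ count_list (a # xs) a = f a * f a ^ count_list xs a" by simp
    also have "f a * f a ^ count_list xs a * (\<Prod>x\<in>set xs - {a}. f x ^ count_list xs x)
       = f a * (\<Prod>x\<in>set xs. f x ^ count_list xs x)"
      using True by (simp add: prod.remove[of "set xs" a] mult.assoc)
    finally show ?thesis using Cons by simp
  next
    case False
    then have "(\<Prod>x\<in>set xs. f x ^ count_list (a # xs) x) = (\<Prod>x\<in>set xs. f x ^ count_list xs x)"
      by (intro prod.cong) auto
    then show ?thesis using Cons False by simp
  qed
qed simp

lemma poisson_tail:
  fixes l :: real assumes "l \<ge> 0"
  shows "1 - exp (- l) * (\<Sum>k<m. l ^ k / fact k) \<le> l ^ m"
proof -
  obtain t where t: "\<bar>t\<bar> \<le> \<bar>l\<bar>" "exp l = (\<Sum>k<m. l ^ k / fact k) + exp t / fact m * l ^ m"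
    using Maclaurin_exp_le[of l m] by blast
  have et: "exp t \<le> exp l" using t(1) assms by auto
  have e1: "exp (- l) * exp l = 1" by (simp add: exp_minus_inverse mult.commute)
  have "1 - exp (- l) * (\<Sum>k<m. l ^ k / fact k) = exp (- l) * (exp t / fact m * l ^ m)"
  proof -
    have s: "(\<Sum>k<m. l ^ k / fact k) = exp l - exp t / fact m * l ^ m" using t(2) by simp
    have "exp (- l) * exp l = 1" by (simp add: exp_minus_inverse mult.commute)
    then show ?thesis unfolding s by (simp add: right_diff_distrib)
  qed
  also have "\<dots> \<le> exp (- l) * (exp l * l ^ m)"
  proof (rule mult_left_mono)
    have "exp t / fact m \<le> exp t" by (simp add: divide_le_eq fact_ge_1 mult_le_cancel_left1) 
    also have "\<dots> \<le> exp l" by (rule et)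
    finally show "exp t / fact m * l ^ m \<le> exp l * l ^ m" using assms by (intro mult_right_mono) auto
  qed simp
  also have "\<dots> = l ^ m" using e1 by (simp add: mult.assoc[symmetric])
  finally show ?thesis .
qed

lemma pp_prob: "poisson_point_process M \<mu> N \<Longrightarrow> prob_space M"
  unfolding poisson_point_process_def by blast

lemma pp_ge:
  assumes pp: "poisson_point_process M \<mu> N" and B: "B \<in> sets \<mu>" "emeasure \<mu> B < \<infinity>"
  shows "{\<omega>\<in>space M. m \<le> card (N \<omega> \<inter> B)} \<in> sets M"
    "emeasure M {\<omega>\<in>space M. m \<le> card (N \<omega> \<inter> B)} \<le> emeasure \<mu> B ^ m"
proof -
  interpret prob_space M using pp_prob[OF pp] .
  define A where "A k = {\<omega>\<in>space M. card (N \<omega> \<inter> B) = k}" for k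
  define l where "l = enn2real (emeasure \<mu> B)"
  have A: "A k \<in> sets M" "prob (A k) = exp (- l) * l ^ k / fact k" for k
    using pp B unfolding poisson_point_process_def A_def l_def by auto
  have eq: "{\<omega>\<in>space M. m \<le> card (N \<omega> \<inter> B)} = space M - (\<Union>k\<in>{..<m}. A k)"
    unfolding A_def by auto
  have Am: "{\<omega>\<in>space M. card (N \<omega> \<inter> B) = k} \<in> sets M" for k using A(1) unfolding A_def .
  show S: "{\<omega>\<in>space M. m \<le> card (N \<omega> \<inter> B)} \<in> sets M" unfolding eq A_def using Am by auto
  have "prob (\<Union>k\<in>{..<m}. A k) = (\<Sum>k<m. prob (A k))"
    by (rule finite_measure_finite_Union) (use Am in \<open>auto simp: disjoint_family_on_def A_def\<close>)
  then have "prob {\<omega>\<in>space M. m \<le> card (N \<omega> \<inter> B)} = 1 - exp (- l) * (\<Sum>k<m. l ^ k / fact k)"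
    unfolding eq using A by (subst prob_compl) (auto simp: sum_distrib_left A_def)
  also have "\<dots> \<le> l ^ m" by (rule poisson_tail) (simp add: l_def)
  finally have "emeasure M {\<omega>\<in>space M. m \<le> card (N \<omega> \<inter> B)} \<le> ennreal (l ^ m)"
    by (simp add: emeasure_eq_measure ennreal_leI)
  also have "ennreal (l ^ m) = emeasure \<mu> B ^ m"
    using B(2) unfolding l_def by (simp add: ennreal_power[symmetric] ennreal_enn2real_if less_top[symmetric])
  finally show "emeasure M {\<omega>\<in>space M. m \<le> card (N \<omega> \<inter> B)} \<le> emeasure \<mu> B ^ m" .
qed

lemma pp_indep:
  assumes pp: "poisson_point_process M \<mu> N" and I: "finite (I::nat set)" "I \<noteq> {}"
    and B: "disjoint_family_on B I" "\<And>i. i \<in> I \<Longrightarrow> B i \<in> sets \<mu> \<and> emeasure \<mu> (B i) < \<infinity>"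
  shows "measure M (\<Inter>i\<in>I. {\<omega>\<in>space M. m i \<le> card (N \<omega> \<inter> B i)})
       = (\<Prod>i\<in>I. measure M {\<omega>\<in>space M. m i \<le> card (N \<omega> \<inter> B i)})"
proof -
  interpret prob_space M using pp_prob[OF pp] .
  have ind: "indep_vars (\<lambda>_. count_space UNIV) (\<lambda>i \<omega>. card (N \<omega> \<inter> B i)) I"
    using pp I B unfolding poisson_point_process_def by blast
  have "prob (\<Inter>i\<in>I. (\<lambda>\<omega>. card (N \<omega> \<inter> B i)) -` {m i..} \<inter> space M)
      = (\<Prod>i\<in>I. prob ((\<lambda>\<omega>. card (N \<omega> \<inter> B i)) -` {m i..} \<inter> space M))"
    by (rule indep_varsD_finite[OF ind I(2,1)]) simp
  moreover have "\<And>i. (\<lambda>\<omega>. card (N \<omega> \<inter> B i)) -` {m i..} \<inter> space M = {\<omega>\<in>space M. m i \<le> card (N \<omega> \<inter> B i)}"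
    by auto
  ultimately show ?thesis by simp
qed

definition cellof :: "real \<Rightarrow> ('d::finite) point \<Rightarrow> 'd cyc \<times> int \<times> nat" where
  "cellof \<delta> \<phi> = (case \<phi> of (g, t, s) \<Rightarrow> (g, \<lfloor>t / \<delta>\<rfloor>, nat \<lfloor>s / \<delta>\<rfloor>))"

lemma int_interval_iff:
  assumes "\<delta> > 0"
  shows "x \<in> {real_of_int m * \<delta> ..< (real_of_int m + 1) * \<delta>} \<longleftrightarrow> \<lfloor>x / \<delta>\<rfloor> = m"
proof -
  have "x \<in> {real_of_int m * \<delta> ..< (real_of_int m + 1) * \<delta>} \<longleftrightarrow> real_of_int m \<le> x / \<delta> \<and> x / \<delta> < real_of_int m + 1"
    using assms by (simp add: field_simps)
  also have "\<dots> \<longleftrightarrow> \<lfloor>x / \<delta>\<rfloor> = m" by (simp add: floor_eq_iff)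
  finally show ?thesis .
qed

lemma nat_interval_iff:
  assumes "\<delta> > 0"
  shows "x \<in> {real k * \<delta> ..< (real k + 1) * \<delta>} \<longleftrightarrow> x \<ge> 0 \<and> nat \<lfloor>x / \<delta>\<rfloor> = k"
proof -
  have "x \<in> {real k * \<delta> ..< (real k + 1) * \<delta>} \<longleftrightarrow> \<lfloor>x / \<delta>\<rfloor> = int k"
    using int_interval_iff[OF assms, of x "int k"] by simp
  also have "\<dots> \<longleftrightarrow> x \<ge> 0 \<and> nat \<lfloor>x / \<delta>\<rfloor> = k"
  proof
    assume "\<lfloor>x / \<delta>\<rfloor> = int k"
    then have "x / \<delta> \<ge> 0" by (metis floor_less_iff of_int_0 not_le of_nat_0_le_iff)
    then show "x \<ge> 0 \<and> nat \<lfloor>x / \<delta>\<rfloor> = k" using assms \<open>\<lfloor>x / \<delta>\<rfloor> = int k\<close> 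
      by (simp add: zero_le_divide_iff)
  next
    assume "x \<ge> 0 \<and> nat \<lfloor>x / \<delta>\<rfloor> = k"
    then show "\<lfloor>x / \<delta>\<rfloor> = int k" using assms by auto
  qed
  finally show ?thesis .
qed

lemma cell_iff:
  assumes "\<delta> > 0"
  shows "\<phi> \<in> cell \<delta> c \<longleftrightarrow> snd (snd \<phi>) \<ge> 0 \<and> cellof \<delta> \<phi> = c"
proof -
  obtain g t s where p: "\<phi> = (g, t, s)" by (cases \<phi>) auto
  obtain g' m k where c: "c = (g', m, k)" by (cases c) auto
  have "\<phi> \<in> cell \<delta> c \<longleftrightarrow> g = g' \<and> t \<in> {real_of_int m * \<delta> ..< (real_of_int m + 1) * \<delta>} \<and> s \<in> {real k * \<delta> ..< (real k + 1) * \<delta>}"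
    unfolding p c cell_def by simp
  also have "\<dots> \<longleftrightarrow> g = g' \<and> \<lfloor>t / \<delta>\<rfloor> = m \<and> s \<ge> 0 \<and> nat \<lfloor>s / \<delta>\<rfloor> = k"
    by (simp only: int_interval_iff[OF assms] nat_interval_iff[OF assms])
  also have "\<dots> \<longleftrightarrow> snd (snd \<phi>) \<ge> 0 \<and> cellof \<delta> \<phi> = c"
    unfolding p c cellof_def by auto
  finally show ?thesis .
qed

lemma cell_disjoint:
  assumes d: "\<delta> > 0" and cc: "c \<noteq> c'" shows "cell \<delta> c \<inter> cell \<delta> c' = {}"
proof (rule equals0I)
  fix \<phi> assume "\<phi> \<in> cell \<delta> c \<inter> cell \<delta> c'"
  then have "cellof \<delta> \<phi> = c" "cellof \<delta> \<phi> = c'" using cell_iff[OF d, of \<phi>] by auto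
  then show False using cc by simp
qed

definition Fev :: "'w measure \<Rightarrow> ('w \<Rightarrow> ('d::finite) point set) \<Rightarrow> real \<Rightarrow> ('d cyc \<times> int \<times> nat) list \<Rightarrow> 'w set" where
  "Fev M N \<delta> L = {\<omega>\<in>space M. \<forall>c\<in>set L. count_list L c \<le> card (N \<omega> \<inter> cell \<delta> c)}"

lemma cell_fin:
  fixes V :: "('d::finite) site \<Rightarrow> ereal"
  assumes "\<delta> > 0" "fst c \<in> cycles"
  shows "cell \<delta> c \<in> sets (intensity V \<alpha>)" "emeasure (intensity V \<alpha>) (cell \<delta> c) < \<infinity>"
proof -
  obtain g m k where c: "c = (g, m, k)" by (cases c) auto
  show "cell \<delta> c \<in> sets (intensity V \<alpha>)" using cell_sets_emeasure(1)[of \<delta> g] assms c by auto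
  show "emeasure (intensity V \<alpha>) (cell \<delta> c) < \<infinity>"
  proof -
    have "emeasure (intensity V \<alpha>) (cell \<delta> c) \<le> ennreal (weight V \<alpha> g * \<delta> * (exp (- (real k * \<delta>)) - exp (- ((real k + 1) * \<delta>))))"
      using cell_sets_emeasure(2)[of \<delta> g V \<alpha> m k] assms c by auto
    then show ?thesis using le_less_trans[OF _ ennreal_less_top] by simp
  qed
qed

lemma Fev_bound:
  fixes V :: "('d::finite) site \<Rightarrow> ereal"
  assumes pp: "poisson_point_process M (intensity V \<alpha>) N" and d: "\<delta> > 0"
    and L: "\<And>c. c \<in> set L \<Longrightarrow> fst c \<in> cycles"
  shows "Fev M N \<delta> L \<in> sets M"
    "emeasure M (Fev M N \<delta> L) \<le> prod_list (map (\<lambda>c. emeasure (intensity V \<alpha>) (cell \<delta> c)) L)"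
proof -
  interpret prob_space M using pp_prob[OF pp] .
  let ?\<mu> = "intensity V \<alpha>"
  define D where "D = remdups L"
  define I where "I = {..<length D}"
  define B where "B i = cell \<delta> (D ! i)" for i
  define m where "m i = count_list L (D ! i)" for i
  have setD: "set D = set L" "distinct D" unfolding D_def by auto
  have Ine0: "I \<noteq> {}" if "L \<noteq> []" 
  proof -
    have "D \<noteq> []" using that setD(1) by auto
    then show ?thesis unfolding I_def by auto
  qed
  have bij: "bij_betw ((!) D) I (set L)" unfolding I_def setD(1)[symmetric] by (rule bij_betw_nth) (auto simp: setD)
  have img: "(!) D ` I = set L" using bij by (rule bij_betw_imp_surj_on)
  have DI: "D ! i \<in> set L" if "i \<in> I" for i using that img by blast
  have Bfin: "B i \<in> sets ?\<mu> \<and> emeasure ?\<mu> (B i) < \<infinity>" if "i \<in> I" for i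
    unfolding B_def using cell_fin[OF d L[OF DI[OF that]]] by auto
  have eqF: "Fev M N \<delta> L = (\<Inter>i\<in>I. {\<omega>\<in>space M. m i \<le> card (N \<omega> \<inter> B i)})" if "L \<noteq> []"
  proof -
    have Ine: "I \<noteq> {}" using Ine0 that by blast
    have ball: "(\<forall>c\<in>set L. P c) \<longleftrightarrow> (\<forall>i\<in>I. P (D ! i))" for P
      unfolding img[symmetric] by simp
    show ?thesis unfolding Fev_def m_def B_def ball using Ine by blast
  qed
  show S: "Fev M N \<delta> L \<in> sets M"
  proof (cases "L = []")
    case True then show ?thesis by (simp add: Fev_def)
  next
    case False
    have "I \<noteq> {}" using Ine0 False by blast
    then show ?thesis unfolding eqF[OF False] using pp_ge(1)[OF pp] Bfin
      by (intro sets.finite_INT) (auto simp: I_def)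
  qed
  show "emeasure M (Fev M N \<delta> L) \<le> prod_list (map (\<lambda>c. emeasure ?\<mu> (cell \<delta> c)) L)"
  proof (cases "L = []")
    case True then show ?thesis by (simp add: Fev_def emeasure_space_1)
  next
    case False
    have Ine: "I \<noteq> {}" using Ine0 False by blast
    have disj: "disjoint_family_on B I" unfolding disjoint_family_on_def B_def
      using setD(2) d by (auto simp: I_def nth_eq_iff_index_eq intro!: cell_disjoint)
    have "emeasure M (Fev M N \<delta> L) = ennreal (prob (Fev M N \<delta> L))" by (simp add: emeasure_eq_measure)
    also have "prob (Fev M N \<delta> L) = (\<Prod>i\<in>I. prob {\<omega>\<in>space M. m i \<le> card (N \<omega> \<inter> B i)})"
      unfolding eqF[OF False] by (rule pp_indep[OF pp _ Ine disj Bfin]) (auto simp: I_def)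
    also have "ennreal \<dots> = (\<Prod>i\<in>I. emeasure M {\<omega>\<in>space M. m i \<le> card (N \<omega> \<inter> B i)})"
      by (simp add: prod_ennreal[symmetric] emeasure_eq_measure)
    also have "\<dots> \<le> (\<Prod>i\<in>I. emeasure ?\<mu> (B i) ^ m i)"
      by (rule prod_mono_ennreal) (use pp_ge(2)[OF pp] Bfin in auto)
    also have "\<dots> = (\<Prod>c\<in>set L. emeasure ?\<mu> (cell \<delta> c) ^ count_list L c)"
      unfolding B_def m_def using prod.reindex_bij_betw[OF bij, of "\<lambda>c. emeasure ?\<mu> (cell \<delta> c) ^ count_list L c"]
      by simp
    also have "\<dots> = prod_list (map (\<lambda>c. emeasure ?\<mu> (cell \<delta> c)) L)"
      by (rule prod_list_count[symmetric])
    finally show ?thesis .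
  qed
qed

lemma supp_nonempty: "g \<in> cycles \<Longrightarrow> supp g \<noteq> {}"
proof -
  assume "g \<in> cycles"
  then obtain xs where g: "g = cycle_of_list xs" "distinct xs" "length xs \<ge> 2" unfolding cycles_def by auto
  have m: "map g xs = rotate1 xs" using cyclic_rotation[OF g(2), of 1] g(1) by simp
  obtain a b r where xs: "xs = a # b # r" using g(3) by (cases xs; cases "tl xs") auto
  have "g a = b" using m unfolding xs by simp
  moreover have "a \<noteq> b" using g(2) unfolding xs by auto
  ultimately have "g a \<noteq> a" by simp
  then show ?thesis unfolding supp_def by auto
qed

lemma card_supp_ge1: assumes "g \<in> cycles" shows "card (supp g) \<ge> 1"
  using supp_nonempty[OF assms] cycles_supp_finite[OF assms] by (simp add: Suc_le_eq card_gt_0_iff)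

fun cchain :: "('d::finite) cyc \<times> int \<Rightarrow> ('d cyc \<times> int \<times> nat) list \<Rightarrow> bool" where
  "cchain gm [] = True"
| "cchain (g, m) (c # cs) = (Rel m g c \<and> cchain (fst c, fst (snd c)) cs)"

definition Lists :: "(('d::finite) cyc \<times> int \<times> nat \<Rightarrow> bool) \<Rightarrow> nat \<Rightarrow> 'd cyc \<times> int \<Rightarrow> ('d cyc \<times> int \<times> nat) list set" where
  "Lists K n gm = {L. set L \<subseteq> Collect K \<and> length L = n \<and> cchain gm L}"

lemma Lists_finite: "finite (Collect K) \<Longrightarrow> finite (Lists K n gm)"
proof -
  assume "finite (Collect K)"
  then have "finite {L. set L \<subseteq> Collect K \<and> length L = n}" by (rule finite_lists_length_eq)
  then show ?thesis unfolding Lists_def by (rule finite_subset[rotated]) auto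
qed

lemma Lists_0: "Lists K 0 gm = {[]}"
  unfolding Lists_def by auto

lemma Lists_Suc: "Lists K (Suc n) (g, m) =
   (\<lambda>(c, L). c # L) ` (SIGMA c:{c. K c \<and> Rel m g c}. Lists K n (fst c, fst (snd c)))"
  unfolding Lists_def by (auto simp: length_Suc_conv image_iff)

lemma chain_sum:
  fixes V :: "('d::finite) site \<Rightarrow> ereal"
  assumes d: "\<delta> > 0" and K: "finite (Collect K)" "\<And>c. K c \<Longrightarrow> fst c \<in> cycles"
  shows "g \<in> cycles \<Longrightarrow> (\<Sum>L\<in>Lists K n (g, m). prod_list (map (\<lambda>c. emeasure (intensity V \<alpha>) (cell \<delta> c)) L))
           \<le> of_nat (card (supp g)) * (beta V \<alpha> * ennreal (hfun \<delta>)) ^ n"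
proof (induction n arbitrary: g m)
  case 0
  then show ?case using card_supp_ge1[OF 0] by (simp add: Lists_0)
next
  case (Suc n)
  let ?\<mu> = "\<lambda>c. emeasure (intensity V \<alpha>) (cell \<delta> c)"
  let ?\<rho> = "beta V \<alpha> * ennreal (hfun \<delta>)"
  let ?C = "{c. K c \<and> Rel m g c}"
  have finC: "finite ?C" using K(1) by (rule finite_subset[rotated]) auto
  have inj: "inj_on (\<lambda>(c, L). c # L) X" for X :: "(('d cyc \<times> int \<times> nat) \<times> ('d cyc \<times> int \<times> nat) list) set"
    by (auto simp: inj_on_def)
  have "(\<Sum>L\<in>Lists K (Suc n) (g, m). prod_list (map ?\<mu> L))
      = (\<Sum>(c, L)\<in>(SIGMA c:?C. Lists K n (fst c, fst (snd c))). prod_list (map ?\<mu> (c # L)))"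
    unfolding Lists_Suc by (subst sum.reindex[OF inj]) (simp add: case_prod_beta)
  also have "\<dots> = (\<Sum>c\<in>?C. \<Sum>L\<in>Lists K n (fst c, fst (snd c)). ?\<mu> c * prod_list (map ?\<mu> L))"
    by (subst sum.Sigma[symmetric]) (auto simp: finC Lists_finite[OF K(1)])
  also have "\<dots> = (\<Sum>c\<in>?C. ?\<mu> c * (\<Sum>L\<in>Lists K n (fst c, fst (snd c)). prod_list (map ?\<mu> L)))"
    by (simp add: sum_distrib_left)
  also have "\<dots> \<le> (\<Sum>c\<in>?C. ?\<mu> c * (of_nat (card (supp (fst c))) * ?\<rho> ^ n))"
    by (intro sum_mono mult_left_mono Suc.IH) (auto simp: K(2))
  also have "\<dots> = (\<Sum>c\<in>?C. ?\<mu> c * of_nat (card (supp (fst c)))) * ?\<rho> ^ n"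
    by (simp add: sum_distrib_right mult.assoc)
  also have "\<dots> \<le> (of_nat (card (supp g)) * beta V \<alpha> * ennreal (hfun \<delta>)) * ?\<rho> ^ n"
    by (intro mult_right_mono rel_sum[OF d Suc.prems finC]) (auto simp: K(2))
  also have "\<dots> = of_nat (card (supp g)) * ?\<rho> ^ Suc n"
    by (simp add: mult.assoc mult.commute mult.left_commute)
  finally show ?case .
qed

fun chain :: "('d::finite) point set \<Rightarrow> 'd point \<Rightarrow> 'd point list \<Rightarrow> bool" where
  "chain Nw \<phi> [] = True"
| "chain Nw \<phi> (x # xs) = (x \<in> anc1 Nw \<phi> \<and> chain Nw x xs)"

lemma anc1_sub: "anc1 Nw \<phi> \<subseteq> Nw"
  unfolding anc1_def by auto

lemma anc1_time: "x \<in> anc1 Nw \<phi> \<Longrightarrow> fst (snd x) < fst (snd \<phi>)"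
  unfolding anc1_def by auto

lemma chain_set: "chain Nw \<phi> xs \<Longrightarrow> set xs \<subseteq> Nw"
proof (induction xs arbitrary: \<phi>)
  case (Cons x xs)
  then have x: "x \<in> anc1 Nw \<phi>" "chain Nw x xs" by auto
  have "x \<in> Nw" using subsetD[OF anc1_sub x(1)] .
  then show ?case using Cons.IH[OF x(2)] by simp
qed simp

lemma chain_time: "chain Nw \<phi> xs \<Longrightarrow> \<forall>y\<in>set xs. fst (snd y) < fst (snd \<phi>)"
proof (induction xs arbitrary: \<phi>)
  case (Cons x xs)
  then have x: "x \<in> anc1 Nw \<phi>" "chain Nw x xs" by auto
  have "fst (snd x) < fst (snd \<phi>)" using anc1_time[OF x(1)] .
  moreover have "\<forall>y\<in>set xs. fst (snd y) < fst (snd x)" using Cons.IH[OF x(2)] .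
  ultimately show ?case by auto
qed simp

lemma chain_distinct: "chain Nw \<phi> xs \<Longrightarrow> distinct (\<phi> # xs)"
proof (induction xs arbitrary: \<phi>)
  case (Cons x xs)
  then have d: "distinct (x # xs)" using Cons.IH[of x] by simp
  have "\<forall>y\<in>set (x # xs). fst (snd y) < fst (snd \<phi>)" using chain_time[OF Cons.prems] .
  then have "\<phi> \<notin> set (x # xs)" by auto
  then show ?case using d by simp
qed simp

lemma chain_append: "chain Nw \<phi> (xs @ ys) \<longleftrightarrow> chain Nw \<phi> xs \<and> chain Nw (last (\<phi> # xs)) ys"
  by (induction xs arbitrary: \<phi>) auto

lemma ancn_chain: "x \<in> ancn Nw n \<phi> \<Longrightarrow> \<exists>xs. length xs = n \<and> chain Nw \<phi> (xs @ [x])"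
proof (induction n arbitrary: x)
  case 0
  then show ?case by auto
next
  case (Suc n)
  then obtain y where y: "y \<in> ancn Nw n \<phi>" "x \<in> anc1 Nw y" by auto
  then obtain ys where ys: "length ys = n" "chain Nw \<phi> (ys @ [y])" using Suc.IH by blast
  have "chain Nw \<phi> ((ys @ [y]) @ [x])" using ys(2) y(2) by (simp add: chain_append)
  then show ?case using ys(1) by (intro exI[of _ "ys @ [y]"]) auto
qed

lemma ancn_Suc': "ancn Nw (Suc n) \<phi> = (\<Union>\<phi>'\<in>anc1 Nw \<phi>. ancn Nw n \<phi>')"
proof (induction n)
  case 0 then show ?case by simp
next
  case (Suc n)
  have "ancn Nw (Suc (Suc n)) \<phi> = (\<Union>x\<in>ancn Nw (Suc n) \<phi>. anc1 Nw x)" by simp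
  also have "\<dots> = (\<Union>\<phi>'\<in>anc1 Nw \<phi>. \<Union>x\<in>ancn Nw n \<phi>'. anc1 Nw x)" unfolding Suc by blast
  also have "\<dots> = (\<Union>\<phi>'\<in>anc1 Nw \<phi>. ancn Nw (Suc n) \<phi>')" by simp
  finally show ?case .
qed

lemma ancn_empty_mono: assumes "n \<le> p" "ancn Nw n \<phi> = {}" shows "ancn Nw p \<phi> = {}"
  using assms(1)
proof (induction p rule: dec_induct)
  case base then show ?case using assms(2) .
next
  case (step p) then show ?case by simp
qed

lemma cellof_simps: "fst (cellof \<delta> \<phi>) = fst \<phi>" "fst (snd (cellof \<delta> \<phi>)) = \<lfloor>fst (snd \<phi>) / \<delta>\<rfloor>"
  "snd (snd (cellof \<delta> \<phi>)) = nat \<lfloor>snd (snd \<phi>) / \<delta>\<rfloor>"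
  unfolding cellof_def by (auto simp: case_prod_beta)

lemma anc_rel:
  assumes d: "\<delta> > 0" and x: "x \<in> anc1 Nw \<phi>" and s: "snd (snd x) \<ge> 0"
  shows "Rel \<lfloor>fst (snd \<phi>) / \<delta>\<rfloor> (fst \<phi>) (cellof \<delta> x)"
proof -
  obtain g t s0 where p: "\<phi> = (g, t, s0)" by (cases \<phi>) auto
  obtain g' t' s' where xx: "x = (g', t', s')" by (cases x) auto
  have A: "supp g' \<inter> supp g \<noteq> {}" "t' < t" "t < t' + s'" using x unfolding p xx anc1_def by auto
  have s': "s' \<ge> 0" using s xx by simp
  have m1: "\<lfloor>t' / \<delta>\<rfloor> \<le> \<lfloor>t / \<delta>\<rfloor>" using A(2) d by (intro floor_mono divide_right_mono) auto
  have "real_of_int \<lfloor>t / \<delta>\<rfloor> \<le> t / \<delta>" by (rule of_int_floor_le)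
  also have "t / \<delta> < t' / \<delta> + s' / \<delta>" using A(3) d by (simp add: add_divide_distrib[symmetric] divide_strict_right_mono)
  also have "t' / \<delta> < real_of_int \<lfloor>t' / \<delta>\<rfloor> + 1" by (rule real_of_int_floor_add_one_gt)
  also have "s' / \<delta> < real_of_int \<lfloor>s' / \<delta>\<rfloor> + 1" by (rule real_of_int_floor_add_one_gt)
  finally have "real_of_int \<lfloor>t / \<delta>\<rfloor> < real_of_int (\<lfloor>t' / \<delta>\<rfloor> + \<lfloor>s' / \<delta>\<rfloor> + 2)" by simp
  then have m2: "\<lfloor>t / \<delta>\<rfloor> - \<lfloor>t' / \<delta>\<rfloor> \<le> \<lfloor>s' / \<delta>\<rfloor> + 1" by linarith
  have "\<lfloor>s' / \<delta>\<rfloor> \<ge> 0" using s' d by simp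
  then show ?thesis unfolding p xx Rel_def cellof_def using A(1) m1 m2 by auto
qed

lemma chain_cchain:
  assumes d: "\<delta> > 0" and Nw: "\<And>p. p \<in> Nw \<Longrightarrow> snd (snd p) \<ge> 0"
  shows "chain Nw \<phi> xs \<Longrightarrow> cchain (fst \<phi>, \<lfloor>fst (snd \<phi>) / \<delta>\<rfloor>) (map (cellof \<delta>) xs)"
proof (induction xs arbitrary: \<phi>)
  case (Cons x xs)
  then have x: "x \<in> anc1 Nw \<phi>" "chain Nw x xs" by auto
  have "Rel \<lfloor>fst (snd \<phi>) / \<delta>\<rfloor> (fst \<phi>) (cellof \<delta> x)"
    by (rule anc_rel[OF d x(1)]) (use Nw anc1_sub x(1) in blast)
  then show ?case using Cons.IH[OF x(2)] by (simp add: cellof_simps)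
qed simp

lemma count_distinct: "distinct P \<Longrightarrow> count_list (map f P) c = card {p\<in>set P. f p = c}"
proof -
  assume dP: "distinct P"
  have "count_list (map f P) c = length (filter (\<lambda>p. c = f p) P)"
    by (simp add: count_list_eq_length_filter filter_map o_def)
  also have "\<dots> = card (set (filter (\<lambda>p. c = f p) P))"
  proof -
    have "distinct (filter (\<lambda>p. c = f p) P)" using dP by simp
    then show ?thesis by (rule distinct_card[symmetric])
  qed
  also have "set (filter (\<lambda>p. c = f p) P) = {p\<in>set P. f p = c}" by auto
  finally show ?thesis .
qed

lemma chain_in_Fev:
  assumes d: "\<delta> > 0" and \<omega>: "\<omega> \<in> space M" and Nw: "\<And>p. p \<in> N \<omega> \<Longrightarrow> fst p \<in> cycles \<and> snd (snd p) \<ge> 0"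
    and fin: "\<And>c. fst c \<in> cycles \<Longrightarrow> finite (N \<omega> \<inter> cell \<delta> c)"
    and \<phi>: "\<phi> \<in> N \<omega> \<inter> cell \<delta> c0" and ch: "chain (N \<omega>) \<phi> xs"
  shows "\<omega> \<in> Fev M N \<delta> (c0 # map (cellof \<delta>) xs)"
proof -
  let ?P = "\<phi> # xs"
  have dP: "distinct ?P" by (rule chain_distinct[OF ch])
  have sP: "set ?P \<subseteq> N \<omega>" using chain_set[OF ch] \<phi> by auto
  have c0: "cellof \<delta> \<phi> = c0" using \<phi> cell_iff[OF d] by blast
  have L: "c0 # map (cellof \<delta>) xs = map (cellof \<delta>) ?P" using c0 by simp
  have "count_list (map (cellof \<delta>) ?P) c \<le> card (N \<omega> \<inter> cell \<delta> c)" if c: "c \<in> set (map (cellof \<delta>) ?P)" for c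
  proof -
    have "c \<in> cellof \<delta> ` set ?P" using c by (simp only: set_map)
    then obtain p where p: "p \<in> set ?P" "c = cellof \<delta> p" by blast
    have "p \<in> N \<omega>" using p(1) sP by blast
    then have "fst p \<in> cycles" using Nw by blast
    then have fc: "fst c \<in> cycles" using p(2) by (simp add: cellof_simps)
    have "count_list (map (cellof \<delta>) ?P) c = card {p\<in>set ?P. cellof \<delta> p = c}" by (rule count_distinct[OF dP])
    also have "\<dots> \<le> card (N \<omega> \<inter> cell \<delta> c)"
    proof (rule card_mono[OF fin[OF fc]])
      show "{p \<in> set ?P. cellof \<delta> p = c} \<subseteq> N \<omega> \<inter> cell \<delta> c"
      proof
        fix q assume q: "q \<in> {p \<in> set ?P. cellof \<delta> p = c}"
        then have "q \<in> N \<omega>" using sP by auto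
        then have "snd (snd q) \<ge> 0" using Nw by blast
        then show "q \<in> N \<omega> \<inter> cell \<delta> c" using q \<open>q \<in> N \<omega>\<close> cell_iff[OF d] by blast
      qed
    qed
    finally show ?thesis .
  qed
  then show ?thesis unfolding Fev_def L using \<omega> by blast
qed

definition Kj :: "nat \<Rightarrow> ('d::finite) cyc \<times> int \<times> nat \<Rightarrow> bool" where
  "Kj j c \<longleftrightarrow> fst c \<in> cycles \<and> to_nat_on cycles (fst c) \<le> j \<and> \<bar>fst (snd c)\<bar> \<le> int j \<and> snd (snd c) \<le> j"

lemma Kj_finite: "finite (Collect (Kj j :: ('d::finite) cyc \<times> int \<times> nat \<Rightarrow> bool))"
proof -
  let ?A = "{g \<in> (cycles :: 'd cyc set). to_nat_on cycles g \<le> j}"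
  have "finite ?A"
    by (rule inj_on_finite[of "to_nat_on cycles" _ "{..j}"])
       (auto intro: inj_on_subset[OF inj_on_to_nat_on[OF countable_cycles]])
  moreover have "Collect (Kj j) \<subseteq> ?A \<times> {- int j..int j} \<times> {..j}"
    unfolding Kj_def by auto
  moreover have "finite (?A \<times> {- int j..int j} \<times> {..j})" using \<open>finite ?A\<close> by auto
  ultimately show ?thesis using finite_subset by blast
qed

lemma Kj_mono: "Kj j c \<Longrightarrow> j \<le> j' \<Longrightarrow> Kj j' c"
  unfolding Kj_def by auto

lemma Kj_cycles: "Kj j c \<Longrightarrow> fst c \<in> cycles"
  unfolding Kj_def by auto

lemma Kj_cover:
  assumes "\<And>c. c \<in> set L \<Longrightarrow> fst c \<in> cycles"
  shows "\<exists>j. \<forall>c\<in>set L. Kj j c"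
proof -
  define jf where "jf c = to_nat_on cycles (fst c) + nat \<bar>fst (snd c)\<bar> + snd (snd c)" for c :: "('a::finite) cyc \<times> int \<times> nat"
  define j where "j = sum_list (map jf L)"
  have "Kj j c" if c: "c \<in> set L" for c
  proof -
    have "jf c \<le> j" unfolding j_def by (rule member_le_sum_list) (use c in auto)
    then show ?thesis unfolding Kj_def jf_def using assms[OF c] by auto
  qed
  then show ?thesis by blast
qed

lemma Lists_mono: "(\<And>c. K c \<Longrightarrow> K' c) \<Longrightarrow> Lists K n gm \<subseteq> Lists K' n gm"
  unfolding Lists_def by auto

lemma incseq_emeasure_bound:
  assumes "range A \<subseteq> sets M" "incseq A" "\<And>j. emeasure M (A j) \<le> b"
  shows "emeasure M (\<Union>j. A j) \<le> b"
  using SUP_emeasure_incseq[OF assms(1,2)] assms(3) by (metis SUP_least)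

lemma geom_zero:
  fixes x C :: ennreal and r :: real
  assumes "\<And>n. x \<le> C * ennreal r ^ n" "C < top" "0 \<le> r" "r < 1"
  shows "x = 0"
proof -
  have "(\<lambda>n. ennreal (r ^ n)) \<longlonglongrightarrow> ennreal 0"
    by (rule tendsto_ennrealI, rule LIMSEQ_power_zero) (use assms in auto)
  then have "(\<lambda>n. C * ennreal (r ^ n)) \<longlonglongrightarrow> C * ennreal 0"
    by (rule ennreal_tendsto_cmult[OF assms(2)])
  then have lim: "(\<lambda>n. C * ennreal r ^ n) \<longlonglongrightarrow> 0"
    using assms(3) by (simp add: ennreal_power)
  have "x \<le> 0"
    by (rule tendsto_le[OF trivial_limit_sequentially lim tendsto_const]) (use assms(1) in auto)
  then show ?thesis by simp
qed

lemma pp_space: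
  assumes pp: "poisson_point_process M (intensity V \<alpha>) N" and \<omega>: "\<omega> \<in> space M" and p: "p \<in> N \<omega>"
  shows "fst p \<in> cycles \<and> snd (snd p) \<ge> 0"
proof -
  have "N \<omega> \<subseteq> space (intensity V \<alpha>)" using pp \<omega> unfolding poisson_point_process_def by blast
  then show ?thesis using p unfolding space_intensity by auto
qed

lemma pp_AE_finite:
  assumes pp: "poisson_point_process M \<mu> N" and B: "B \<in> sets \<mu>" "emeasure \<mu> B < \<infinity>"
  shows "AE \<omega> in M. finite (N \<omega> \<inter> B)"
  using pp B unfolding poisson_point_process_def by blast

lemma good1:
  fixes V :: "('d::finite) site \<Rightarrow> ereal"
  assumes pp: "poisson_point_process M (intensity V \<alpha>) N" and d: "\<delta> > 0"
  shows "AE \<omega> in M. \<forall>c\<in>cycles \<times> UNIV. finite (N \<omega> \<inter> cell \<delta> c)"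
proof (subst AE_ball_countable)
  show "countable (cycles \<times> (UNIV :: (int \<times> nat) set))"
    by (intro countable_SIGMA countable_cycles) auto
  show "\<forall>c\<in>cycles \<times> UNIV. AE \<omega> in M. finite (N \<omega> \<inter> cell \<delta> c)"
  proof
    fix c :: "'d cyc \<times> int \<times> nat" assume "c \<in> cycles \<times> UNIV"
    then have fc: "fst c \<in> cycles" by auto
    show "AE \<omega> in M. finite (N \<omega> \<inter> cell \<delta> c)"
      using pp_AE_finite[OF pp cell_fin(1)[OF d fc, of V \<alpha>] cell_fin(2)[OF d fc, of V \<alpha>]] .
  qed
qed

lemma no_inf_chain:
  fixes V :: "('d::finite) site \<Rightarrow> ereal" and N :: "'w \<Rightarrow> 'd point set"
  assumes pp: "poisson_point_process M (intensity V \<alpha>) N" and d: "\<delta> > 0"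
    and c0: "fst c0 \<in> cycles"
    and r: "beta V \<alpha> * ennreal (hfun \<delta>) = ennreal r" "0 \<le> r" "r < 1"
  shows "AE \<omega> in M. \<forall>\<phi>\<in>N \<omega> \<inter> cell \<delta> c0. \<exists>n. \<not> (\<exists>xs. length xs = n \<and> chain (N \<omega>) \<phi> xs)"
proof -
  interpret prob_space M using pp_prob[OF pp] .
  obtain g0 m0 k0 where c0e: "c0 = (g0, m0, k0)" by (cases c0) auto
  have g0: "g0 \<in> cycles" using c0 c0e by simp
  let ?\<mu> = "\<lambda>c. emeasure (intensity V \<alpha>) (cell \<delta> c)"
  define G where "G n j = (\<Union>L\<in>Lists (Kj j) n (g0, m0). Fev M N \<delta> (c0 # L))" for n j
  have Lcyc: "fst c \<in> cycles" if "L \<in> Lists (Kj j) n gm" "c \<in> set (c0 # L)" for L j n gm c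
  proof (cases "c = c0")
    case False
    then have "c \<in> set L" using that(2) by simp
    then have "Kj j c" using that(1) unfolding Lists_def by blast
    then show ?thesis by (rule Kj_cycles)
  qed (use c0 in simp)
  have Gs: "G n j \<in> sets M" for n j
    unfolding G_def
    by (intro sets.finite_UN Lists_finite[OF Kj_finite] ballI Fev_bound(1)[OF pp d]) (use Lcyc in blast)+
  define C where "C = ?\<mu> c0 * of_nat (card (supp g0))"
  have Cfin: "C < top" unfolding C_def using cell_fin(2)[OF d c0, of V \<alpha>]
    by (simp add: ennreal_mult_less_top of_nat_less_top)
  have Gbound: "emeasure M (G n j) \<le> C * ennreal r ^ n" for n j
  proof -
    have "emeasure M (G n j) \<le> (\<Sum>L\<in>Lists (Kj j) n (g0, m0). emeasure M (Fev M N \<delta> (c0 # L)))"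
      unfolding G_def
      by (rule emeasure_subadditive_finite[OF Lists_finite[OF Kj_finite]]) (use Gs Fev_bound(1)[OF pp d] Lcyc in blast)
    also have "\<dots> \<le> (\<Sum>L\<in>Lists (Kj j) n (g0, m0). prod_list (map ?\<mu> (c0 # L)))"
      by (intro sum_mono Fev_bound(2)[OF pp d]) (use Lcyc in blast)
    also have "\<dots> = ?\<mu> c0 * (\<Sum>L\<in>Lists (Kj j) n (g0, m0). prod_list (map ?\<mu> L))"
      by (simp add: sum_distrib_left)
    also have "\<dots> \<le> ?\<mu> c0 * (of_nat (card (supp g0)) * (beta V \<alpha> * ennreal (hfun \<delta>)) ^ n)"
      by (intro mult_left_mono chain_sum[OF d Kj_finite] g0) (auto simp: Kj_cycles)
    also have "\<dots> = C * ennreal r ^ n" unfolding C_def r(1) by (simp add: mult.assoc)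
    finally show ?thesis .
  qed
  have Ginc: "incseq (G n)" for n
    unfolding incseq_def G_def
  proof (intro allI impI)
    fix j j' :: nat assume "j \<le> j'"
    then have "Lists (Kj j) n (g0, m0) \<subseteq> Lists (Kj j') n (g0, m0)"
      by (intro Lists_mono) (auto intro: Kj_mono)
    then show "(\<Union>L\<in>Lists (Kj j) n (g0, m0). Fev M N \<delta> (c0 # L)) \<subseteq> (\<Union>L\<in>Lists (Kj j') n (g0, m0). Fev M N \<delta> (c0 # L))"
      by blast
  qed
  define Z where "Z = (\<Inter>n. \<Union>j. G n j)"
  have Zs: "Z \<in> sets M" unfolding Z_def using Gs by auto
  have Zn: "emeasure M Z \<le> C * ennreal r ^ n" for n
  proof -
    have "emeasure M Z \<le> emeasure M (\<Union>j. G n j)"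
      by (rule emeasure_mono) (auto simp: Z_def Gs)
    also have "\<dots> \<le> C * ennreal r ^ n"
      by (rule incseq_emeasure_bound) (use Gs Ginc Gbound in auto)
    finally show ?thesis .
  qed
  have Z0: "emeasure M Z = 0" by (rule geom_zero[OF Zn Cfin r(2,3)])
  have Znull: "Z \<in> null_sets M" using Zs Z0 by auto
  have AEZ: "AE \<omega> in M. \<omega> \<notin> Z" by (rule AE_not_in[OF Znull])
  have AE1: "AE \<omega> in M. \<forall>c\<in>cycles \<times> UNIV. finite (N \<omega> \<inter> cell \<delta> c)" by (rule good1[OF pp d])
  show ?thesis
    using AEZ AE1 AE_space
  proof eventually_elim
    case (elim \<omega>)
    note \<omega> = elim(3)
    have Nw: "\<And>p. p \<in> N \<omega> \<Longrightarrow> fst p \<in> cycles \<and> snd (snd p) \<ge> 0" using pp_space[OF pp \<omega>] by blast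
    have fin: "\<And>c. fst c \<in> cycles \<Longrightarrow> finite (N \<omega> \<inter> cell \<delta> c)" using elim(2) by (auto simp: mem_Times_iff)
    show ?case
    proof (rule ballI, rule ccontr)
      fix \<phi> assume \<phi>: "\<phi> \<in> N \<omega> \<inter> cell \<delta> c0"
        and all: "\<not> (\<exists>n. \<not> (\<exists>xs. length xs = n \<and> chain (N \<omega>) \<phi> xs))"
      have cph: "cellof \<delta> \<phi> = c0" using \<phi> cell_iff[OF d] by blast
      have "\<omega> \<in> (\<Union>j. G n j)" for n
      proof -
        obtain xs where xs: "length xs = n" "chain (N \<omega>) \<phi> xs" using all by blast
        let ?L = "map (cellof \<delta>) xs"
        have inF: "\<omega> \<in> Fev M N \<delta> (c0 # ?L)" by (rule chain_in_Fev[where M=M and N=N and \<omega>=\<omega>, OF d \<omega> Nw fin \<phi> xs(2)])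
        have cc: "cchain (fst \<phi>, \<lfloor>fst (snd \<phi>) / \<delta>\<rfloor>) ?L" by (rule chain_cchain[OF d _ xs(2)]) (use Nw in blast)
        have gm: "(fst \<phi>, \<lfloor>fst (snd \<phi>) / \<delta>\<rfloor>) = (g0, m0)" using cph c0e by (auto simp: cellof_def case_prod_beta)
        have Lc: "fst c \<in> cycles" if "c \<in> set ?L" for c
        proof -
          have "c \<in> cellof \<delta> ` set xs" using that by (simp only: set_map)
          then obtain p where p: "p \<in> set xs" "c = cellof \<delta> p" by blast
          have "p \<in> N \<omega>" using chain_set[OF xs(2)] p(1) by blast
          then show ?thesis using Nw p(2) by (simp add: cellof_simps)
        qed
        obtain j where j: "\<forall>c\<in>set ?L. Kj j c" using Kj_cover[OF Lc] by blast
        have "?L \<in> Lists (Kj j) n (g0, m0)" unfolding Lists_def using j xs(1) cc gm by auto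
        then show ?thesis unfolding G_def using inF by blast
      qed
      then have "\<omega> \<in> Z" unfolding Z_def by blast
      then show False using elim(1) by blast
    qed
  qed
qed

definition Uj :: "real \<Rightarrow> ('d::finite) cyc \<Rightarrow> int \<Rightarrow> nat \<Rightarrow> 'd point set" where
  "Uj \<delta> g m j = (\<Union>c\<in>{c. Kj j c \<and> Rel m g c}. cell \<delta> c)"

lemma Uj_bound:
  fixes V :: "('d::finite) site \<Rightarrow> ereal"
  assumes d: "\<delta> > 0" and g: "g \<in> cycles"
  shows "Uj \<delta> g m j \<in> sets (intensity V \<alpha>)"
    "emeasure (intensity V \<alpha>) (Uj \<delta> g m j) \<le> of_nat (card (supp g)) * beta V \<alpha> * ennreal (hfun \<delta>)"
proof -
  let ?C = "{c. Kj j c \<and> Rel m g c}"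
  have finC: "finite ?C" using Kj_finite[of j] by (rule finite_subset[rotated]) auto
  have Cs: "cell \<delta> c \<in> sets (intensity V \<alpha>)" if "c \<in> ?C" for c
    using cell_fin(1)[OF d] that Kj_cycles by blast
  show "Uj \<delta> g m j \<in> sets (intensity V \<alpha>)" unfolding Uj_def using finC Cs by auto
  have "emeasure (intensity V \<alpha>) (Uj \<delta> g m j) \<le> (\<Sum>c\<in>?C. emeasure (intensity V \<alpha>) (cell \<delta> c))"
    unfolding Uj_def by (rule emeasure_subadditive_finite[OF finC]) (use Cs in blast)
  also have "\<dots> \<le> (\<Sum>c\<in>?C. emeasure (intensity V \<alpha>) (cell \<delta> c) * of_nat (card (supp (fst c))))"
  proof (rule sum_mono)
    fix c assume "c \<in> ?C"
    then have "card (supp (fst c)) \<ge> 1" using card_supp_ge1 Kj_cycles by blast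
    then have "(1::ennreal) \<le> of_nat (card (supp (fst c)))" by simp
    then show "emeasure (intensity V \<alpha>) (cell \<delta> c) \<le> emeasure (intensity V \<alpha>) (cell \<delta> c) * of_nat (card (supp (fst c)))"
      using mult_left_mono[of 1 "of_nat (card (supp (fst c)))" "emeasure (intensity V \<alpha>) (cell \<delta> c)"] by simp
  qed
  also have "\<dots> \<le> of_nat (card (supp g)) * beta V \<alpha> * ennreal (hfun \<delta>)"
    by (rule rel_sum[OF d g finC]) (auto dest!: Kj_cycles)
  finally show "emeasure (intensity V \<alpha>) (Uj \<delta> g m j) \<le> of_nat (card (supp g)) * beta V \<alpha> * ennreal (hfun \<delta>)" .
qed

lemma good2:
  fixes V :: "('d::finite) site \<Rightarrow> ereal"
  assumes pp: "poisson_point_process M (intensity V \<alpha>) N" and d: "\<delta> > 0" and b: "beta V \<alpha> < 1"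
  shows "AE \<omega> in M. \<forall>gm\<in>cycles \<times> UNIV. finite (N \<omega> \<inter> (\<Union>j. Uj \<delta> (fst gm) (snd gm) j))"
proof (subst AE_ball_countable)
  show "countable (cycles \<times> (UNIV :: int set))"
    by (intro countable_SIGMA countable_cycles) auto
  show "\<forall>gm\<in>cycles \<times> UNIV. AE \<omega> in M. finite (N \<omega> \<inter> (\<Union>j. Uj \<delta> (fst gm) (snd gm) j))"
  proof
    fix gm :: "'d cyc \<times> int" assume "gm \<in> cycles \<times> UNIV"
    then obtain g m where gm: "gm = (g, m)" "g \<in> cycles" by auto
    have inc: "incseq (Uj \<delta> g m)"
      unfolding incseq_def Uj_def by (auto intro: Kj_mono)
    have rs: "range (Uj \<delta> g m) \<subseteq> sets (intensity V \<alpha>)" using Uj_bound(1)[OF d gm(2)] by auto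
    have "emeasure (intensity V \<alpha>) (\<Union>j. Uj \<delta> g m j) \<le> of_nat (card (supp g)) * beta V \<alpha> * ennreal (hfun \<delta>)"
      by (rule incseq_emeasure_bound[OF rs inc Uj_bound(2)[OF d gm(2)]])
    also have "\<dots> < \<infinity>"
    proof -
      have "(1::ennreal) < top" by simp
      then have bt: "beta V \<alpha> < top" using b by (rule order.strict_trans[rotated])
      then show ?thesis by (simp add: ennreal_mult_less_top of_nat_less_top)
    qed
    finally have fin: "emeasure (intensity V \<alpha>) (\<Union>j. Uj \<delta> g m j) < \<infinity>" .
    have "(\<Union>j. Uj \<delta> g m j) \<in> sets (intensity V \<alpha>)" using rs by auto
    then show "AE \<omega> in M. finite (N \<omega> \<inter> (\<Union>j. Uj \<delta> (fst gm) (snd gm) j))"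
      using pp_AE_finite[OF pp _ fin] gm by simp
  qed
qed

lemma anc1_in_U:
  assumes d: "\<delta> > 0" and Nw: "\<And>p. p \<in> Nw \<Longrightarrow> fst p \<in> cycles \<and> snd (snd p) \<ge> 0"
  shows "anc1 Nw (g, t, s) \<subseteq> Nw \<inter> (\<Union>j. Uj \<delta> g \<lfloor>t / \<delta>\<rfloor> j)"
proof
  fix x assume x: "x \<in> anc1 Nw (g, t, s)"
  have xN: "x \<in> Nw" using anc1_sub x by blast
  have R: "Rel \<lfloor>t / \<delta>\<rfloor> g (cellof \<delta> x)" using anc_rel[OF d x] Nw[OF xN] by simp
  have fc: "fst (cellof \<delta> x) \<in> cycles" using Nw[OF xN] by (simp add: cellof_simps)
  obtain j where j: "Kj j (cellof \<delta> x)" using Kj_cover[of "[cellof \<delta> x]"] fc by auto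
  have "x \<in> cell \<delta> (cellof \<delta> x)" using cell_iff[OF d] Nw[OF xN] by blast
  then have "x \<in> Uj \<delta> g \<lfloor>t / \<delta>\<rfloor> j" unfolding Uj_def using j R by blast
  then show "x \<in> Nw \<inter> (\<Union>j. Uj \<delta> g \<lfloor>t / \<delta>\<rfloor> j)" using xN by blast
qed

lemma clan_finite_det:
  assumes Nw: "\<And>p. p \<in> Nw \<Longrightarrow> fst p \<in> cycles"
    and A1: "\<And>g t s. g \<in> cycles \<Longrightarrow> finite (anc1 Nw (g, t, s))"
    and H3: "\<And>\<phi>. \<phi> \<in> Nw \<Longrightarrow> \<exists>n. \<not> (\<exists>xs. length xs = n \<and> chain Nw \<phi> xs)"
    and g: "g \<in> cycles"
  shows "finite (clan Nw (g, t, s))"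
proof (rule ccontr)
  assume inf: "infinite (clan Nw (g, t, s))"
  let ?\<phi> = "(g, t, s)"
  have fin1: "finite (anc1 Nw \<psi>)" if "fst \<psi> \<in> cycles" for \<psi>
    using A1[of "fst \<psi>" "fst (snd \<psi>)" "snd (snd \<psi>)"] that by simp
  have finn: "finite (ancn Nw n \<psi>)" if "fst \<psi> \<in> cycles" for n \<psi>
    using that
  proof (induction n arbitrary: \<psi>)
    case 0 then show ?case using fin1 by simp
  next
    case (Suc n)
    have "finite (\<Union>\<phi>'\<in>anc1 Nw \<psi>. ancn Nw n \<phi>')"
    proof (rule finite_UN_I)
      show "finite (anc1 Nw \<psi>)" by (rule fin1[OF Suc.prems])
      fix \<phi>' assume "\<phi>' \<in> anc1 Nw \<psi>"
      then have "\<phi>' \<in> Nw" using anc1_sub by blast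
      then show "finite (ancn Nw n \<phi>')" using Suc.IH Nw by blast
    qed
    then show ?case by (simp only: ancn_Suc')
  qed
  have ne: "ancn Nw n ?\<phi> \<noteq> {}" for n
  proof
    assume e: "ancn Nw n ?\<phi> = {}"
    have "clan Nw ?\<phi> \<subseteq> (\<Union>k<n. ancn Nw k ?\<phi>)"
    proof
      fix x assume "x \<in> clan Nw ?\<phi>"
      then obtain k where k: "x \<in> ancn Nw k ?\<phi>" unfolding clan_def by blast
      have "k < n"
      proof (rule ccontr)
        assume "\<not> k < n"
        then have "ancn Nw k ?\<phi> = {}" using ancn_empty_mono[OF _ e] by simp
        then show False using k by blast
      qed
      then show "x \<in> (\<Union>k<n. ancn Nw k ?\<phi>)" using k by blast
    qed
    moreover have "finite (\<Union>k<n. ancn Nw k ?\<phi>)" using finn g by auto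
    ultimately show False using inf finite_subset by blast
  qed
  have "\<exists>\<phi>'\<in>anc1 Nw ?\<phi>. \<forall>n. ancn Nw n \<phi>' \<noteq> {}"
  proof (rule ccontr)
    assume "\<not> (\<exists>\<phi>'\<in>anc1 Nw ?\<phi>. \<forall>n. ancn Nw n \<phi>' \<noteq> {})"
    then have "\<forall>\<phi>'\<in>anc1 Nw ?\<phi>. \<exists>n. ancn Nw n \<phi>' = {}" by blast
    then obtain f where f: "\<And>\<phi>'. \<phi>' \<in> anc1 Nw ?\<phi> \<Longrightarrow> ancn Nw (f \<phi>') \<phi>' = {}" by metis
    define n0 where "n0 = Max (insert 0 (f ` anc1 Nw ?\<phi>))"
    have "f \<phi>' \<le> n0" if "\<phi>' \<in> anc1 Nw ?\<phi>" for \<phi>'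
      unfolding n0_def using that fin1[of ?\<phi>] g by (intro Max_ge) auto
    then have "ancn Nw n0 \<phi>' = {}" if "\<phi>' \<in> anc1 Nw ?\<phi>" for \<phi>'
      using ancn_empty_mono[OF _ f[OF that]] that by blast
    then have "ancn Nw (Suc n0) ?\<phi> = {}" by (simp only: ancn_Suc') blast
    then show False using ne by blast
  qed
  then obtain \<phi>' where \<phi>': "\<phi>' \<in> anc1 Nw ?\<phi>" "\<And>n. ancn Nw n \<phi>' \<noteq> {}" by blast
  have "\<phi>' \<in> Nw" using \<phi>'(1) anc1_sub by blast
  then obtain n where n: "\<not> (\<exists>xs. length xs = n \<and> chain Nw \<phi>' xs)" using H3 by blast
  show False
  proof (cases n)
    case 0 then show False using n by simp
  next
    case (Suc k)
    obtain x where "x \<in> ancn Nw k \<phi>'" using \<phi>'(2)[of k] by blast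
    then obtain xs where "length xs = k" "chain Nw \<phi>' (xs @ [x])" using ancn_chain by blast
    then show False using n Suc by (metis length_append_singleton)
  qed
qed

lemma weight_mono:
  assumes V: "\<And>x. V x \<ge> 0" and a: "\<alpha>' \<le> \<alpha>"
  shows "weight V \<alpha> g \<le> weight V \<alpha>' g"
proof -
  define S where "S = (\<Sum>x\<in>supp g. V (g x - x))"
  have S0: "S \<ge> 0" unfolding S_def using V by (intro sum_nonneg) auto
  show ?thesis
  proof (cases "S = \<infinity>")
    case True then show ?thesis unfolding weight_def S_def[symmetric] Let_def by simp
  next
    case False
    have r: "real_of_ereal S \<ge> 0" using S0 by (simp add: real_of_ereal_pos)
    have "- \<alpha> * real_of_ereal S \<le> - \<alpha>' * real_of_ereal S" using a r by (intro mult_right_mono) auto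
    then show ?thesis unfolding weight_def S_def[symmetric] Let_def using False by simp
  qed
qed

lemma beta_mono:
  assumes V: "\<And>x. V x \<ge> 0" and a: "\<alpha>' \<le> \<alpha>"
  shows "beta V \<alpha> \<le> beta V \<alpha>'"
  unfolding beta_def
  apply (rule infsum_mono)
    apply (rule nonneg_summable_on_complete, simp)
   apply (rule nonneg_summable_on_complete, simp)
  apply (auto intro!: ennreal_leI mult_left_mono weight_mono[of V, OF V a])
  done

lemma beta_lt1:
  assumes V: "\<And>x. V x \<ge> 0" and a: "ereal \<alpha> > alpha_star V"
  shows "beta V \<alpha> < 1"
proof -
  from a obtain x where x: "x \<in> {ereal \<alpha>' | \<alpha>'. \<alpha>' > 0 \<and> beta V \<alpha>' < 1}" "x < ereal \<alpha>"
    unfolding alpha_star_def Inf_less_iff by blast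
  then obtain \<alpha>' where "x = ereal \<alpha>'" "beta V \<alpha>' < 1" by blast
  with x(2) have "\<alpha>' \<le> \<alpha>" "beta V \<alpha>' < 1" by auto
  then show ?thesis using beta_mono[of V, OF V] by (meson le_less_trans)
qed

lemma choose_delta:
  fixes B :: real assumes "0 \<le> B" "B < 1"
  shows "\<exists>\<delta>>0. B * hfun \<delta> < 1"
proof -
  have "((\<lambda>\<delta>. B * hfun \<delta>) \<longlongrightarrow> B * 1) (at_right 0)"
    by (intro tendsto_mult tendsto_const hfun_tendsto)
  then have "eventually (\<lambda>\<delta>. B * hfun \<delta> < 1) (at_right (0::real))"
    using assms by (intro order_tendstoD(2)) auto
  moreover have "eventually (\<lambda>\<delta>. 0 < \<delta>) (at_right (0::real))" by (rule eventually_at_right_less)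
  ultimately have "eventually (\<lambda>\<delta>. 0 < \<delta> \<and> B * hfun \<delta> < 1) (at_right (0::real))"
    by (rule eventually_conj[rotated])
  then show ?thesis using eventually_happens[of _ "at_right (0::real)"] by auto
qed

theorem corollary3p7:
  fixes V :: "('d::finite) site \<Rightarrow> ereal" and \<alpha> :: real
    and M :: "'w measure" and N :: "'w \<Rightarrow> 'd point set"
  assumes "\<And>x. V x \<ge> 0"
    and "strictly_convex_lattice V"
    and "V 0 = 0"
    and "\<alpha> > 0"
    and "ereal \<alpha> > alpha_star V"
    and "poisson_point_process M (intensity V \<alpha>) N"
  shows "AE \<omega> in M. \<forall>g\<in>cycles. \<forall>t s. s \<ge> 0 \<longrightarrow> finite (clan (N \<omega>) (g, t, s))"
proof -
  note pp = assms(6)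
  interpret prob_space M using pp_prob[OF pp] .
  have b: "beta V \<alpha> < 1" by (rule beta_lt1[OF assms(1,5)])
  define B where "B = enn2real (beta V \<alpha>)"
  have bt: "beta V \<alpha> \<noteq> top"
  proof -
    have "(1::ennreal) < top" by simp
    then show ?thesis using b by (metis order.strict_trans order.irrefl)
  qed
  have bB: "beta V \<alpha> = ennreal B" unfolding B_def using bt by (simp add: ennreal_enn2real_if)
  have B0: "0 \<le> B" unfolding B_def by simp
  have "ennreal B < ennreal 1" using b bB by simp
  then have B: "0 \<le> B" "B < 1" using B0 by (auto simp: ennreal_less_iff)
  obtain \<delta> where d: "\<delta> > 0" "B * hfun \<delta> < 1" using choose_delta[OF B] by blast
  define r where "r = B * hfun \<delta>"
  have r: "beta V \<alpha> * ennreal (hfun \<delta>) = ennreal r" "0 \<le> r" "r < 1"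
    using d B hfun_nonneg[OF d(1)] unfolding r_def bB by (auto simp: ennreal_mult'')
  have AE3: "AE \<omega> in M. \<forall>c0\<in>cycles \<times> UNIV. \<forall>\<phi>\<in>N \<omega> \<inter> cell \<delta> c0. \<exists>n. \<not> (\<exists>xs. length xs = n \<and> chain (N \<omega>) \<phi> xs)"
  proof (subst AE_ball_countable)
    show "countable (cycles \<times> (UNIV :: (int \<times> nat) set))"
      by (intro countable_SIGMA countable_cycles) auto
    show "\<forall>c0\<in>cycles \<times> UNIV. AE \<omega> in M. \<forall>\<phi>\<in>N \<omega> \<inter> cell \<delta> c0. \<exists>n. \<not> (\<exists>xs. length xs = n \<and> chain (N \<omega>) \<phi> xs)"
      using no_inf_chain[OF pp d(1) _ r] by auto
  qed
  have AE2: "AE \<omega> in M. \<forall>gm\<in>cycles \<times> UNIV. finite (N \<omega> \<inter> (\<Union>j. Uj \<delta> (fst gm) (snd gm) j))"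
    by (rule good2[OF pp d(1) b])
  show ?thesis
    using AE3 AE2 AE_space
  proof eventually_elim
    case (elim \<omega>)
    have Nw: "\<And>p. p \<in> N \<omega> \<Longrightarrow> fst p \<in> cycles \<and> snd (snd p) \<ge> 0" using pp_space[OF pp elim(3)] by blast
    show ?case
    proof (intro ballI allI impI)
      fix g :: "'d cyc" and t s :: real assume g: "g \<in> cycles"
      show "finite (clan (N \<omega>) (g, t, s))"
      proof (rule clan_finite_det[OF _ _ _ g])
        show "\<And>p. p \<in> N \<omega> \<Longrightarrow> fst p \<in> cycles" using Nw by blast
        show "finite (anc1 (N \<omega>) (g', t', s'))" if "g' \<in> cycles" for g' t' s'
        proof -
          have mem: "(g', \<lfloor>t' / \<delta>\<rfloor>) \<in> cycles \<times> UNIV" using that by simp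
          have fin: "finite (N \<omega> \<inter> (\<Union>j. Uj \<delta> g' \<lfloor>t' / \<delta>\<rfloor> j))" using bspec[OF elim(2) mem] by simp
          have sub: "anc1 (N \<omega>) (g', t', s') \<subseteq> N \<omega> \<inter> (\<Union>j. Uj \<delta> g' \<lfloor>t' / \<delta>\<rfloor> j)"
            by (rule anc1_in_U[OF d(1) Nw])
          show ?thesis by (rule finite_subset[OF sub fin])
        qed
        show "\<exists>n. \<not> (\<exists>xs. length xs = n \<and> chain (N \<omega>) \<phi> xs)" if "\<phi> \<in> N \<omega>" for \<phi>
        proof -
          have "\<phi> \<in> cell \<delta> (cellof \<delta> \<phi>)" using cell_iff[OF d(1)] Nw[OF that] by blast
          then have in2: "\<phi> \<in> N \<omega> \<inter> cell \<delta> (cellof \<delta> \<phi>)" using that by blast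
          have mem2: "cellof \<delta> \<phi> \<in> cycles \<times> UNIV" using Nw[OF that] by (auto simp: cellof_simps mem_Times_iff)
          show ?thesis using bspec[OF bspec[OF elim(1) mem2] in2] .
        qed
      qed
    qed
  qed
qed

end
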